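(* Let $n\ge 1$, $m\ge 2$, $0\le k\le n-1$. The maximum possible size of a $k$-bounded acyclic CP-net over $n$ variables of domain size $m$ is $\mathcal{M}_k=(n-k)m^k+\frac{m^k-1}{m-1}$.
   Context: Variables $V=\{v_1,\dots,v_n\}$, each with a finite domain of size $m$. A CP-net specifies for each $v_i$ a parent set $Pa(v_i)\subseteq V\setminus\{v_i\}$ and a conditional preference table $\mathrm{CPT}(v_i)$ which, for each assignment $\gamma$ of values to the variables in $Pa(v_i)$, either contains one statement (a strict total order on the domain of $v_i$) or contains nothing; parents are non-dummy (each actually affects the preferences). The CP-net is acyclic if the graph with edges $(v_j,v_i)$ for $v_j\in Pa(v_i)$ is acyclic, and $k$-bounded if all $|Pa(v_i)|\le k$. The size of $\mathrm{CPT}(v_i)$ is its number of statements (at most $m^{|Pa(v_i)|}$), and the size of the CP-net is the sum of the sizes of its CPTs. *)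

theory Defs
  imports Complex_Main "HOL-Library.FuncSet"
begin

text \<open>Variables are v_0,...,v_(n-1) (indices below n); every domain is {0..<m}.
  A CP-net is given by a parent map Pa and a CPT map cpt: cpt i g is the
  statement of CPT(v_i) for the parent assignment g (None = no statement);
  a statement is a strict total order (as a relation) on the domain.\<close>

definition assignments :: "nat \<Rightarrow> nat set \<Rightarrow> (nat \<Rightarrow> nat) set" where
  "assignments m P = PiE P (\<lambda>_. {..<m})"

definition is_strict_total_order :: "nat \<Rightarrow> (nat \<times> nat) set \<Rightarrow> bool" where
  "is_strict_total_order m r \<longleftrightarrow> r \<subseteq> {..<m} \<times> {..<m} \<and> strict_linear_order_on {..<m} r"

definition cpnet :: "nat \<Rightarrow> nat \<Rightarrow> (nat \<Rightarrow> nat set)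
    \<Rightarrow> (nat \<Rightarrow> (nat \<Rightarrow> nat) \<Rightarrow> (nat \<times> nat) set option) \<Rightarrow> bool" where
  "cpnet n m Pa cpt \<longleftrightarrow>
     (\<forall>i<n. Pa i \<subseteq> {..<n} - {i}) \<and>
     (\<forall>i<n. \<forall>g\<in>assignments m (Pa i). \<forall>r. cpt i g = Some r \<longrightarrow> is_strict_total_order m r) \<and>
     \<comment> \<open>non-dummy parents: changing only the value of the parent changes CPT(v_i)\<close>
     (\<forall>i<n. \<forall>j\<in>Pa i. \<exists>g\<in>assignments m (Pa i). \<exists>g'\<in>assignments m (Pa i).
         (\<forall>l\<in>Pa i - {j}. g l = g' l) \<and> cpt i g \<noteq> cpt i g')"

definition cpnet_acyclic :: "nat \<Rightarrow> (nat \<Rightarrow> nat set) \<Rightarrow> bool" where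
  "cpnet_acyclic n Pa \<longleftrightarrow> acyclic {(j, i). i < n \<and> j \<in> Pa i}"

definition k_bounded :: "nat \<Rightarrow> nat \<Rightarrow> (nat \<Rightarrow> nat set) \<Rightarrow> bool" where
  "k_bounded n k Pa \<longleftrightarrow> (\<forall>i<n. card (Pa i) \<le> k)"

definition cpt_size :: "nat \<Rightarrow> (nat \<Rightarrow> nat set)
    \<Rightarrow> (nat \<Rightarrow> (nat \<Rightarrow> nat) \<Rightarrow> (nat \<times> nat) set option) \<Rightarrow> nat \<Rightarrow> nat" where
  "cpt_size m Pa cpt i = card {g \<in> assignments m (Pa i). cpt i g \<noteq> None}"

definition cpnet_size :: "nat \<Rightarrow> nat \<Rightarrow> (nat \<Rightarrow> nat set)
    \<Rightarrow> (nat \<Rightarrow> (nat \<Rightarrow> nat) \<Rightarrow> (nat \<times> nat) set option) \<Rightarrow> nat" where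
  "cpnet_size n m Pa cpt = (\<Sum>i<n. cpt_size m Pa cpt i)"

end

theory Submission
  imports Defs
begin

lemma card_assign: "finite P \<Longrightarrow> card (assignments m P) = m ^ card P"
  by (simp add: assignments_def card_PiE)

lemma sum_bound:
  fixes m :: nat
  assumes "m \<ge> 1"
  shows "finite S \<Longrightarrow> wf R \<Longrightarrow> (\<forall>i\<in>S. Pa i \<subseteq> S - {i}) \<Longrightarrow> (\<forall>i\<in>S. card (Pa i) \<le> k)
    \<Longrightarrow> (\<forall>i\<in>S. \<forall>j\<in>Pa i. (i, j) \<in> R)
    \<Longrightarrow> (\<Sum>i\<in>S. m ^ card (Pa i)) \<le> (\<Sum>j<card S. m ^ min j k)"
proof (induction "card S" arbitrary: S)
  case 0
  then show ?case by simp
next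
  case (Suc c)
  then have "S \<noteq> {}" by auto
  from wf_eq_minimal[THEN iffD1, OF Suc.prems(2)] this
  obtain v where v: "v \<in> S" "\<forall>y. (y, v) \<in> R \<longrightarrow> y \<notin> S" by blast
  let ?S = "S - {v}"
  have cS: "card ?S = c" using Suc.hyps(2) v(1) Suc.prems(1) by simp
  have sub: "\<forall>i\<in>?S. Pa i \<subseteq> ?S - {i}"
  proof
    fix i assume i: "i \<in> ?S"
    have "v \<notin> Pa i" using v(2) Suc.prems(5) i by auto
    then show "Pa i \<subseteq> ?S - {i}" using Suc.prems(3) i by auto
  qed
  have IH: "(\<Sum>i\<in>?S. m ^ card (Pa i)) \<le> (\<Sum>j<c. m ^ min j k)"
    using Suc.hyps(1)[of ?S] cS Suc.prems sub by auto
  have "card (Pa v) \<le> card (S - {v})"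
    using Suc.prems(3) v(1) Suc.prems(1) by (intro card_mono) auto
  then have "card (Pa v) \<le> min c k" using cS Suc.prems(4) v(1) by auto
  then have pv: "m ^ card (Pa v) \<le> m ^ min c k" using assms by (intro power_increasing) auto
  have "(\<Sum>i\<in>S. m ^ card (Pa i)) = m ^ card (Pa v) + (\<Sum>i\<in>?S. m ^ card (Pa i))"
    using v(1) Suc.prems(1) by (simp add: sum.remove)
  also have "\<dots> \<le> m ^ min c k + (\<Sum>j<c. m ^ min j k)" using IH pv by simp
  also have "\<dots> = (\<Sum>j<card S. m ^ min j k)" using Suc.hyps(2)[symmetric] by simp
  finally show ?case .
qed

lemma sum_formula:
  fixes m n k :: nat
  assumes "m \<ge> 2" "k \<le> n"
  shows "real (\<Sum>j<n. m ^ min j k) = real (n - k) * real m ^ k + (real m ^ k - 1) / (real m - 1)"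
proof -
  have split: "{..<n} = {..<k} \<union> {k..<n}" using assms by auto
  have "(\<Sum>j<n. m ^ min j k) = (\<Sum>j<k. m ^ min j k) + (\<Sum>j\<in>{k..<n}. m ^ min j k)"
    unfolding split by (rule sum.union_disjoint) auto
  also have "(\<Sum>j<k. m ^ min j k) = (\<Sum>j<k. m ^ j)" by (intro sum.cong) auto
  also have "(\<Sum>j\<in>{k..<n}. m ^ min j k) = (\<Sum>j\<in>{k..<n}. m ^ k)" by (intro sum.cong) auto
  finally have e: "(\<Sum>j<n. m ^ min j k) = (\<Sum>j<k. m ^ j) + (n - k) * m ^ k" by simp
  have g: "(\<Sum>j<k. real m ^ j) = (real m ^ k - 1) / (real m - 1)"
    using assms by (intro geometric_sum) auto
  show ?thesis unfolding e using g by (simp add: of_nat_diff assms)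
qed

definition ltr :: "nat \<Rightarrow> (nat \<times> nat) set" where "ltr m = {(a, b). a < b \<and> b < m}"
definition gtr :: "nat \<Rightarrow> (nat \<times> nat) set" where "gtr m = {(a, b). b < a \<and> a < m}"

lemma ltr_ok: "is_strict_total_order m (ltr m)"
  unfolding is_strict_total_order_def strict_linear_order_on_def ltr_def trans_def irrefl_def total_on_def
  by auto

lemma gtr_ok: "is_strict_total_order m (gtr m)"
  unfolding is_strict_total_order_def strict_linear_order_on_def gtr_def trans_def irrefl_def total_on_def
  by auto

theorem lemma1:
  fixes n m k :: nat
  assumes "n \<ge> 1" and "m \<ge> 2" and "k \<le> n - 1"
  shows "(\<exists>Pa cpt. cpnet n m Pa cpt \<and> cpnet_acyclic n Pa \<and> k_bounded n k Pa \<and>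
            real (cpnet_size n m Pa cpt) = real (n - k) * real m ^ k + (real m ^ k - 1) / (real m - 1))
       \<and> (\<forall>Pa cpt. cpnet n m Pa cpt \<and> cpnet_acyclic n Pa \<and> k_bounded n k Pa \<longrightarrow>
            real (cpnet_size n m Pa cpt) \<le> real (n - k) * real m ^ k + (real m ^ k - 1) / (real m - 1))"
proof
  have kn: "k \<le> n" using assms by auto
  define Pa :: "nat \<Rightarrow> nat set" where "Pa i = {..<min i k}" for i
  define cpt :: "nat \<Rightarrow> (nat \<Rightarrow> nat) \<Rightarrow> (nat \<times> nat) set option" where
    "cpt i g = Some (if even (\<Sum>l\<in>Pa i. g l) then ltr m else gtr m)" for i g
  have ne: "ltr m \<noteq> gtr m"
  proof
    assume "ltr m = gtr m"
    moreover have "(0, 1) \<in> ltr m" using assms by (auto simp: ltr_def)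
    ultimately show False by (auto simp: gtr_def)
  qed
  have c1: "\<forall>i<n. Pa i \<subseteq> {..<n} - {i}" by (auto simp: Pa_def)
  have c2: "\<forall>i<n. \<forall>g\<in>assignments m (Pa i). \<forall>r. cpt i g = Some r \<longrightarrow> is_strict_total_order m r"
    by (auto simp: cpt_def ltr_ok gtr_ok)
  have c3: "\<forall>i<n. \<forall>j\<in>Pa i. \<exists>g\<in>assignments m (Pa i). \<exists>g'\<in>assignments m (Pa i).
         (\<forall>l\<in>Pa i - {j}. g l = g' l) \<and> cpt i g \<noteq> cpt i g'"
  proof (intro allI impI ballI)
    fix i j assume j: "j \<in> Pa i"
    define g where "g = restrict (\<lambda>_. 0::nat) (Pa i)"
    define g' where "g' = restrict (\<lambda>l. if l = j then 1 else 0::nat) (Pa i)"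
    have ga: "g \<in> assignments m (Pa i)" "g' \<in> assignments m (Pa i)"
      using assms by (auto simp: assignments_def g_def g'_def)
    have s1: "(\<Sum>l\<in>Pa i. g l) = 0" by (simp add: g_def)
    have "(\<Sum>l\<in>Pa i. g' l) = (\<Sum>l\<in>Pa i. if l = j then 1 else 0)"
      by (intro sum.cong) (auto simp: g'_def)
    also have "\<dots> = 1" using j by (simp add: Pa_def)
    finally have s2: "(\<Sum>l\<in>Pa i. g' l) = 1" .
    have "cpt i g \<noteq> cpt i g'" using s1 s2 ne by (simp add: cpt_def)
    moreover have "\<forall>l\<in>Pa i - {j}. g l = g' l" by (auto simp: g_def g'_def)
    ultimately show "\<exists>g\<in>assignments m (Pa i). \<exists>g'\<in>assignments m (Pa i).
         (\<forall>l\<in>Pa i - {j}. g l = g' l) \<and> cpt i g \<noteq> cpt i g'" using ga by blast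
  qed
  have net: "cpnet n m Pa cpt" unfolding cpnet_def using c1 c2 c3 by blast
  have acy: "cpnet_acyclic n Pa"
  proof -
    have "{(j, i). i < n \<and> j \<in> Pa i} \<subseteq> less_than" by (auto simp: Pa_def)
    moreover have "acyclic less_than" by (rule wf_acyclic[OF wf_less_than])
    ultimately show ?thesis unfolding cpnet_acyclic_def using acyclic_subset by blast
  qed
  have kb: "k_bounded n k Pa" by (auto simp: k_bounded_def Pa_def)
  have "cpnet_size n m Pa cpt = (\<Sum>i<n. m ^ min i k)"
    unfolding cpnet_size_def cpt_size_def
    by (intro sum.cong) (auto simp: cpt_def card_assign Pa_def)
  then have "real (cpnet_size n m Pa cpt) = real (n - k) * real m ^ k + (real m ^ k - 1) / (real m - 1)"
    using sum_formula[OF assms(2) kn] by simp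
  then show "\<exists>Pa cpt. cpnet n m Pa cpt \<and> cpnet_acyclic n Pa \<and> k_bounded n k Pa \<and>
            real (cpnet_size n m Pa cpt) = real (n - k) * real m ^ k + (real m ^ k - 1) / (real m - 1)"
    using net acy kb by blast
next
  have kn: "k \<le> n" using assms by auto
  show "\<forall>Pa cpt. cpnet n m Pa cpt \<and> cpnet_acyclic n Pa \<and> k_bounded n k Pa \<longrightarrow>
            real (cpnet_size n m Pa cpt) \<le> real (n - k) * real m ^ k + (real m ^ k - 1) / (real m - 1)"
  proof (intro allI impI)
    fix Pa cpt assume h: "cpnet n m Pa cpt \<and> cpnet_acyclic n Pa \<and> k_bounded n k Pa"
    have sub: "\<forall>i<n. Pa i \<subseteq> {..<n} - {i}" using h by (simp add: cpnet_def)
    have fin: "\<And>i. i < n \<Longrightarrow> finite (Pa i)" using sub by (meson finite_Diff finite_lessThan finite_subset)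
    let ?E = "{(j, i). i < n \<and> j \<in> Pa i}"
    have "?E \<subseteq> {..<n} \<times> {..<n}" using sub by auto
    then have fE: "finite ?E" by (rule finite_subset) auto
    have wfR: "wf (?E\<inverse>)" using finite_acyclic_wf_converse[OF fE] h by (simp add: cpnet_acyclic_def)
    have "(\<Sum>i\<in>{..<n}. m ^ card (Pa i)) \<le> (\<Sum>j<card {..<n}. m ^ min j k)"
      by (rule sum_bound[OF _ _ wfR]) (use assms sub h in \<open>auto simp: k_bounded_def\<close>)
    then have b1: "(\<Sum>i<n. m ^ card (Pa i)) \<le> (\<Sum>j<n. m ^ min j k)" by simp
    have "cpnet_size n m Pa cpt \<le> (\<Sum>i<n. m ^ card (Pa i))"
      unfolding cpnet_size_def cpt_size_def
    proof (intro sum_mono)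
      fix i assume "i \<in> {..<n}"
      then have f: "finite (Pa i)" using fin by auto
      have "card {g \<in> assignments m (Pa i). cpt i g \<noteq> None} \<le> card (assignments m (Pa i))"
        by (rule card_mono) (auto simp: assignments_def f finite_PiE)
      then show "card {g \<in> assignments m (Pa i). cpt i g \<noteq> None} \<le> m ^ card (Pa i)"
        using card_assign[OF f] by simp
    qed
    then have "cpnet_size n m Pa cpt \<le> (\<Sum>j<n. m ^ min j k)" using b1 by linarith
    then have "real (cpnet_size n m Pa cpt) \<le> real (\<Sum>j<n. m ^ min j k)" by linarith
    then show "real (cpnet_size n m Pa cpt) \<le> real (n - k) * real m ^ k + (real m ^ k - 1) / (real m - 1)"
      using sum_formula[OF assms(2) kn] by simp
  qed
qed

end
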